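(* Let $$G(t)=\sum_{n=1}^{\infty}\exp\big(t-\pi n^2 e^{4t}\big)\big(16\pi^2 n^4 e^{8t}-24\pi n^2 e^{4t}\big),\qquad t\ge 0,$$ and for $z\in\mathbb{C}$ let $\eta(z)=\int_0^\infty G(t)\cosh(zt)\,dt$. Then for every real $y$ there exists $\varepsilon>0$ such that $\eta(x+iy)\neq 0$ for all real $x$ with $0<|x|<\varepsilon$.
   Context: The function $\eta$ satisfies $\eta(z)=\xi\big(\tfrac{z+1}{2}\big)$, where $\xi(s)=\tfrac12 s(s-1)\pi^{-s/2}\Gamma(s/2)\zeta(s)$ is Riemann's xi-function; the line $\operatorname{Re}z=0$ corresponds to the critical line $\operatorname{Re}s=1/2$. *)

theory Defs
  imports "HOL-Analysis.Analysis"
begin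

definition G :: "real \<Rightarrow> real" where
  "G t = (\<Sum>m. let n = real (Suc m) in
            exp (t - pi * n\<^sup>2 * exp (4 * t)) *
            (16 * pi\<^sup>2 * n ^ 4 * exp (8 * t) - 24 * pi * n\<^sup>2 * exp (4 * t)))"

definition eta :: "complex \<Rightarrow> complex" where
  "eta z = integral {0..} (\<lambda>t::real. complex_of_real (G t) * cosh (z * complex_of_real t))"

end

theory Submission
  imports Defs "HOL-Complex_Analysis.Complex_Analysis"
begin


lemma pow_le_exp:
  fixes x :: real assumes "0 \<le> x" "0 < j"
  shows "x ^ j \<le> real j ^ j * exp x"
proof -
  have "(1 + x / real j) ^ j \<le> exp x"
    using assms by (intro exp_ge_one_plus_x_over_n_power_n) auto
  moreover have "(x / real j) ^ j \<le> (1 + x / real j) ^ j"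
    using assms by (intro power_mono) auto
  ultimately have "(x / real j) ^ j \<le> exp x" by linarith
  then show ?thesis using assms by (simp add: power_divide field_simps)
qed

definition trm :: "nat \<Rightarrow> real \<Rightarrow> real" where
  "trm m t = (let n = real (Suc m) in
            exp (t - pi * n\<^sup>2 * exp (4 * t)) *
            (16 * pi\<^sup>2 * n ^ 4 * exp (8 * t) - 24 * pi * n\<^sup>2 * exp (4 * t)))"

lemma G_trm: "G t = (\<Sum>m. trm m t)"
  unfolding G_def trm_def ..

lemma trm_alt:
  "trm m t = exp t * exp (- (pi * real (Suc m)^2 * exp (4*t))) *
     (16 * (pi * real (Suc m)^2 * exp (4*t))^2 - 24 * (pi * real (Suc m)^2 * exp (4*t)))"
proof -
  define X where "X = pi * real (Suc m)^2 * exp (4*t)"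
  have e8: "exp (8 * t) = exp (4*t) * exp (4*t)" by (simp flip: exp_add)
  have ed: "exp (t - X) = exp t * exp (-X)" by (simp flip: exp_add)
  have "trm m t = exp (t - X) * (16 * pi\<^sup>2 * real (Suc m) ^ 4 * exp (8 * t) - 24 * X)"
    unfolding trm_def Let_def X_def by (simp add: algebra_simps)
  also have "16 * pi\<^sup>2 * real (Suc m) ^ 4 * exp (8 * t) = 16 * X^2"
    unfolding e8 X_def by (simp add: power2_eq_square power4_eq_xxxx algebra_simps)
  finally have *: "trm m t = exp (t - X) * (16 * X^2 - 24 * X)" .
  show ?thesis unfolding * ed[unfolded X_def] X_def ..
qed

lemma trm_bounds:
  assumes t: "0 \<le> t" and k: "1 \<le> k"
  shows "0 \<le> trm m t"
    "trm m t \<le> 16 * real (k+2)^(k+2) * exp ((1 - 4 * real k) * t) / real (Suc m)^2"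
proof -
  define n where "n = real (Suc m)"
  define x where "x = pi * n^2 * exp (4*t)"
  have n1: "1 \<le> n" unfolding n_def by simp
  have u1: "1 \<le> exp (4*t)" using t by simp
  have "1 \<le> n^2" using n1 by simp
  then have "pi * 1 * 1 \<le> pi * n^2 * exp (4*t)"
    using u1 by (intro mult_mono) auto
  then have xpi: "pi \<le> x" unfolding x_def by simp
  then have x0: "0 < x" using pi_gt3 by linarith
  have tr: "trm m t = exp t * exp (-x) * (16 * x^2 - 24 * x)"
    unfolding trm_alt x_def n_def ..
  have q: "0 \<le> 16 * x^2 - 24 * x"
  proof -
    have "24 * x \<le> 16 * x * x" using xpi pi_gt3 x0 by (intro mult_right_mono) auto
    then show ?thesis by (simp add: power2_eq_square)
  qed
  show "0 \<le> trm m t" unfolding tr using q by simp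
  define j where "j = k + 2"
  have "x ^ j \<le> real j ^ j * exp x" using x0 by (intro pow_le_exp) (auto simp: j_def)
  then have "x^k * x^2 \<le> real j ^ j * exp x" by (simp add: j_def power_add power2_eq_square mult_ac)
  then have "x^2 \<le> real j ^ j * exp x / x^k" using x0 by (simp add: field_simps)
  then have A: "x^2 * exp (-x) \<le> real j ^ j / x ^ k"
    using x0 by (simp add: exp_minus field_simps)
  have "n^2 * exp (4 * real k * t) \<le> x ^ k"
  proof -
    have "x ^ k = pi^k * (n^2)^k * exp (4*t)^k" unfolding x_def by (simp add: power_mult_distrib)
    also have "exp (4*t)^k = exp (4 * real k * t)" by (simp flip: exp_of_nat_mult add: ac_simps)
    finally have xe: "x ^ k = pi^k * (n^2)^k * exp (4 * real k * t)" .
    have "1 \<le> pi^k" using pi_gt3 by (simp add: one_le_power)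
    moreover have "n^2 \<le> (n^2)^k" using n1 k by (simp add: power_increasing[of 1 k "n^2", simplified])
    ultimately have "1 * n^2 \<le> pi^k * (n^2)^k" by (intro mult_mono) auto
    then show ?thesis unfolding xe by (intro mult_right_mono) auto
  qed
  then have B: "real j ^ j / x ^ k \<le> real j ^ j / (n^2 * exp (4 * real k * t))"
    using n1 x0 by (intro divide_left_mono) auto
  have "trm m t \<le> exp t * (16 * (x^2 * exp (-x)))"
    unfolding tr using x0 by (simp add: algebra_simps)
  also have "\<dots> \<le> exp t * (16 * (real j ^ j / (n^2 * exp (4 * real k * t))))"
    using A B by (intro mult_left_mono) auto
  also have "\<dots> = 16 * real j ^ j * (exp t / exp (4 * real k * t)) / n^2"
    by (simp add: field_simps)
  also have "exp t / exp (4 * real k * t) = exp ((1 - 4 * real k) * t)"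
    by (simp add: exp_diff[symmetric] algebra_simps)
  finally show "trm m t \<le> 16 * real (k+2)^(k+2) * exp ((1 - 4 * real k) * t) / real (Suc m)^2"
    by (simp add: j_def n_def)
qed


definition S2 :: real where "S2 = (\<Sum>m. 1 / real (Suc m)^2)"

lemma summable_S2: "summable (\<lambda>m. 1 / real (Suc m)^2)"
proof -
  have "summable (\<lambda>n. inverse (real n ^ 2))" by (rule inverse_power_summable) auto
  then have "summable (\<lambda>n. inverse (real (Suc n) ^ 2))" by (subst summable_Suc_iff)
  then show ?thesis by (simp add: divide_inverse)
qed

lemma trm_bound1:
  assumes t: "0 \<le> t" shows "norm (trm m t) \<le> 432 * (1 / real (Suc m)^2)"
proof -
  have e: "exp ((1 - 4 * real 1) * t) \<le> 1" using t by simp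
  have b: "trm m t \<le> 16 * real (1+2)^(1+2) * exp ((1 - 4 * real 1) * t) / real (Suc m)^2"
    using trm_bounds(2)[OF t, of 1 m] by simp
  have "16 * real (1+2)^(1+2) * exp ((1 - 4 * real 1) * t) / real (Suc m)^2
        \<le> 16 * real (1+2)^(1+2) * 1 / real (Suc m)^2"
    by (intro divide_right_mono mult_left_mono e) auto
  with b have "trm m t \<le> 432 * (1 / real (Suc m)^2)" by simp
  then show ?thesis using trm_bounds(1)[OF t, of 1 m] by simp
qed

lemma trm_summable:
  assumes "0 \<le> t" shows "summable (\<lambda>m. trm m t)"
  by (rule summable_comparison_test_ev[OF always_eventually summable_mult[OF summable_S2, of 432]])
     (use trm_bound1[OF assms] in auto)

lemma G_nonneg: "0 \<le> t \<Longrightarrow> 0 \<le> G t"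
  unfolding G_trm using trm_bounds(1)[of t 1] by (intro suminf_nonneg trm_summable) auto

lemma trm_pos: assumes "0 \<le> t" shows "0 < trm m t"
proof -
  define x where "x = pi * real (Suc m)^2 * exp (4*t)"
  have "pi * 1 * 1 \<le> pi * real (Suc m)^2 * exp (4*t)"
    using assms by (intro mult_mono) auto
  then have xpi: "pi \<le> x" unfolding x_def by simp
  then have "24 * x < 16 * x * x" using pi_gt3 by (intro mult_strict_right_mono) auto
  then show ?thesis unfolding trm_alt x_def[symmetric] by (simp add: power2_eq_square)
qed

lemma G_pos: "0 \<le> t \<Longrightarrow> 0 < G t"
  unfolding G_trm by (intro suminf_pos trm_summable trm_pos)

lemma G_bound:
  assumes "0 \<le> t" "1 \<le> k"
  shows "G t \<le> 16 * real (k+2)^(k+2) * exp ((1 - 4 * real k) * t) * S2"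
proof -
  have "G t \<le> (\<Sum>m. 16 * real (k+2)^(k+2) * exp ((1 - 4 * real k) * t) * (1 / real (Suc m)^2))"
    unfolding G_trm using trm_bounds(2)[OF assms]
    by (intro suminf_le trm_summable summable_mult summable_S2 assms) auto
  also have "\<dots> = 16 * real (k+2)^(k+2) * exp ((1 - 4 * real k) * t) * S2"
    unfolding S2_def by (rule suminf_mult[OF summable_S2])
  finally show ?thesis .
qed

lemma trm_cont: "continuous_on A (trm m)"
  unfolding trm_def[abs_def] Let_def by (intro continuous_intros)

lemma G_cont: "continuous_on {0..} G"
proof -
  have ul: "uniform_limit {0..} (\<lambda>n t. \<Sum>i<n. trm i t) (\<lambda>t. \<Sum>i. trm i t) sequentially"
    by (rule Weierstrass_m_test[OF _ summable_mult[OF summable_S2, of 432]]) (use trm_bound1 in auto)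
  have c: "continuous_on {0..} (\<lambda>t. \<Sum>i<n. trm i t)" for n
    by (intro continuous_on_sum trm_cont)
  have "continuous_on {0..} (\<lambda>t. \<Sum>i. trm i t)"
    by (rule uniform_limit_theorem[OF always_eventually[OF allI[OF c]] ul trivial_limit_sequentially])
  then show ?thesis unfolding G_trm[abs_def] .
qed



definition F :: "complex \<Rightarrow> real \<Rightarrow> complex" where
  "F z t = complex_of_real (G t) * cosh (z * complex_of_real t)"

lemma eta_F: "eta z = integral {0..} (F z)"
  unfolding eta_def F_def[abs_def] ..

lemma norm_cosh_le: "norm (cosh (w::complex)) \<le> exp (norm w)"
proof -
  have "norm (cosh w) = norm (exp w + exp (-w)) / 2" by (simp add: cosh_field_def)
  also have "\<dots> \<le> (norm (exp w) + norm (exp (-w))) / 2"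
    by (intro divide_right_mono norm_triangle_ineq) auto
  also have "\<dots> = (exp (Re w) + exp (- Re w)) / 2" by (simp add: norm_exp_eq_Re)
  also have "\<dots> \<le> (exp (norm w) + exp (norm w)) / 2"
    using abs_Re_le_cmod[of w] by (intro divide_right_mono add_mono) auto
  finally show ?thesis by simp
qed

definition kR :: "real \<Rightarrow> nat" where "kR R = nat \<lceil>R\<rceil> + 1"
definition CR :: "real \<Rightarrow> real" where "CR R = 16 * real (kR R + 2)^(kR R + 2) * S2"

lemma S2_nonneg: "0 \<le> S2"
  unfolding S2_def by (intro suminf_nonneg summable_S2) auto

lemma CR_nonneg: "0 \<le> CR R"
  unfolding CR_def using S2_nonneg by simp

lemma F_bound:
  assumes t: "0 \<le> t" and R: "0 \<le> R" and z: "norm z \<le> R"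
  shows "norm (F z t) \<le> CR R * exp (- t)"
proof -
  define k where "k = kR R"
  have k1: "1 \<le> k" unfolding k_def kR_def by simp
  have kR: "R + 1 \<le> real k" unfolding k_def kR_def using R by linarith
  have "norm (z * complex_of_real t) \<le> R * t"
    using z t by (simp add: norm_mult mult_right_mono)
  then have c: "norm (cosh (z * complex_of_real t)) \<le> exp (R * t)"
    using norm_cosh_le[of "z * complex_of_real t"] by (meson exp_le_cancel_iff order_trans)
  have "norm (F z t) = G t * norm (cosh (z * complex_of_real t))"
    unfolding F_def using G_nonneg[OF t] by (simp add: norm_mult)
  also have "\<dots> \<le> (16 * real (k+2)^(k+2) * exp ((1 - 4 * real k) * t) * S2) * exp (R * t)"
    using G_bound[OF t k1] G_nonneg[OF t] c S2_nonneg by (intro mult_mono) auto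
  also have "\<dots> = CR R * exp ((1 - 4 * real k) * t + R * t)"
    unfolding CR_def k_def[symmetric] by (simp add: exp_add)
  also have "\<dots> \<le> CR R * exp (- t)"
  proof -
    have "(1 - 4 * real k) * t + R * t \<le> - t"
    proof -
      have "(2 - 4 * real k + R) * t \<le> 0" using kR R t
        by (intro mult_nonpos_nonneg) auto
      then show ?thesis by (simp add: algebra_simps)
    qed
    then show ?thesis using CR_nonneg by (intro mult_left_mono) auto
  qed
  finally show ?thesis .
qed

lemma F_cont: "0 \<le> c \<Longrightarrow> continuous_on {c..} (F z)"
proof -
  assume c: "0 \<le> c"
  have Gc: "continuous_on {c..} G" by (rule continuous_on_subset[OF G_cont]) (use c in auto)
  show ?thesis unfolding F_def[abs_def] by (intro continuous_intros Gc)
qed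

lemma F_int:
  assumes c: "0 \<le> c" and R: "0 \<le> R" and z: "norm z \<le> R"
  shows "F z integrable_on {c..}" "norm (integral {c..} (F z)) \<le> CR R * exp (- c)"
proof -
  have gi: "((\<lambda>t. CR R * exp (- 1 * t)) has_integral CR R * (exp (- 1 * c) / 1)) {c..}"
    by (intro has_integral_mult_right has_integral_exp_minus_to_infinity) auto
  have meas: "F z \<in> borel_measurable (lebesgue_on {c..})"
    by (intro continuous_imp_measurable_on_sets_lebesgue F_cont c) auto
  have bd: "\<And>t. t \<in> {c..} \<Longrightarrow> norm (F z t) \<le> CR R * exp (- 1 * t)"
    using F_bound[OF _ R z] c by auto
  show "F z integrable_on {c..}"
    by (rule measurable_bounded_by_integrable_imp_integrable[OF meas _ bd])
       (use gi in auto)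
  show "norm (integral {c..} (F z)) \<le> CR R * exp (- c)"
    using integral_norm_bound_integral'[OF bd meas _ gi] by simp
qed

lemma eta_split:
  assumes N: "0 \<le> N" and R: "0 \<le> R" and z: "norm z \<le> R"
  shows "eta z = integral {0..N} (F z) + integral {N..} (F z)"
proof -
  have i1: "(F z has_integral integral {0..N} (F z)) {0..N}"
    by (intro integrable_integral integrable_continuous_interval continuous_on_subset[OF F_cont[of 0]]) auto
  have i2: "(F z has_integral integral {N..} (F z)) {N..}"
    by (intro integrable_integral F_int[OF N R z])
  have eq: "{0..N} \<inter> {N..} = {N}" using N by auto
  have "(F z has_integral integral {0..N} (F z) + integral {N..} (F z)) ({0..N} \<union> {N..})"
    by (rule has_integral_Un[OF i1 i2]) (simp only: eq negligible_sing)
  moreover have "{0..N} \<union> {N..} = {0::real..}" using N by auto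
  ultimately show ?thesis unfolding eta_F by (simp add: integral_unique)
qed

lemma etaN_holo: "(\<lambda>z. integral (cbox 0 (real n)) (F z)) holomorphic_on UNIV"
proof (rule leibniz_rule_holomorphic[where fx = "\<lambda>x t. complex_of_real (G t) * (sinh (x * complex_of_real t) * complex_of_real t)"])
  fix x t
  show "((\<lambda>x. F x t) has_field_derivative complex_of_real (G t) * (sinh (x * complex_of_real t) * complex_of_real t)) (at x within UNIV)"
    unfolding F_def by (auto intro!: derivative_eq_intros)
next
  fix x
  show "F x integrable_on cbox 0 (real n)"
    unfolding box_real
    by (intro integrable_continuous_interval continuous_on_subset[OF F_cont[of 0]]) auto
next
  have Gc: "continuous_on (UNIV \<times> cbox 0 (real n)) (\<lambda>p. G (snd p))"
    by (rule continuous_on_compose2[OF G_cont continuous_on_snd]) (auto simp: box_real)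
  have "continuous_on (UNIV \<times> cbox 0 (real n))
     (\<lambda>p. complex_of_real (G (snd p)) * (sinh (fst p * complex_of_real (snd p)) * complex_of_real (snd p)))"
    by (intro continuous_intros Gc)
  then show "continuous_on (UNIV \<times> cbox 0 (real n))
     (\<lambda>(x, t). complex_of_real (G t) * (sinh (x * complex_of_real t) * complex_of_real t))"
    by (simp add: case_prod_beta')
qed auto

lemma eta_holo_ball: assumes R: "0 \<le> R" shows "eta holomorphic_on ball 0 R"
proof -
  have ul: "uniform_limit (cball 0 R) (\<lambda>n z. integral (cbox 0 (real n)) (F z)) eta sequentially"
  proof (rule uniform_limitI)
    fix e :: real assume e: "0 < e"
    have "(\<lambda>n. exp (-1::real) ^ n) \<longlonglongrightarrow> 0" by (intro LIMSEQ_realpow_zero) auto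
    then have "(\<lambda>n. CR R * exp (-1) ^ n) \<longlonglongrightarrow> CR R * 0" by (intro tendsto_mult tendsto_const)
    then have "\<forall>\<^sub>F n in sequentially. CR R * exp (-1) ^ n < e" using e by (intro order_tendstoD(2)) auto
    then show "\<forall>\<^sub>F n in sequentially. \<forall>z\<in>cball 0 R. dist (integral (cbox 0 (real n)) (F z)) (eta z) < e"
    proof eventually_elim
      case (elim n)
      show ?case
      proof
        fix z :: complex assume "z \<in> cball 0 R"
        then have z: "norm z \<le> R" by simp
        have "dist (integral (cbox 0 (real n)) (F z)) (eta z) = norm (integral {real n..} (F z))"
          using eta_split[of "real n" R z] R z by (simp add: box_real dist_norm)
        also have "\<dots> \<le> CR R * exp (- real n)" by (rule F_int(2)) (use R z in auto)
        also have "exp (- real n) = exp (-1) ^ n" by (simp flip: exp_of_nat_mult)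
        finally show "dist (integral (cbox 0 (real n)) (F z)) (eta z) < e" using elim by simp
      qed
    qed
  qed
  have "\<forall>\<^sub>F n in sequentially. continuous_on (cball 0 R) (\<lambda>z. integral (cbox 0 (real n)) (F z)) \<and>
          (\<lambda>z. integral (cbox 0 (real n)) (F z)) holomorphic_on ball 0 R"
    using etaN_holo by (intro always_eventually allI conjI holomorphic_on_imp_continuous_on)
       (auto intro: holomorphic_on_subset)
  from holomorphic_uniform_limit[OF this ul trivial_limit_sequentially] show ?thesis by blast
qed

lemma eta_holo: "eta holomorphic_on UNIV"
  unfolding holomorphic_on_def
proof
  fix w :: complex
  have "eta holomorphic_on ball 0 (norm w + 1)" by (rule eta_holo_ball) auto
  then have "eta field_differentiable at w"
    by (rule holomorphic_on_imp_differentiable_at) auto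
  then show "eta field_differentiable at w within UNIV" by simp
qed



lemma eta0: "eta 0 \<noteq> 0"
proof -
  have hi: "(F 0 has_integral eta 0) {0..}"
    unfolding eta_F by (intro integrable_integral F_int[of 0 0]) auto
  have "((Re \<circ> F 0) has_integral Re (eta 0)) {0..}"
    by (rule has_integral_linear[OF hi bounded_linear_Re])
  moreover have "Re \<circ> F 0 = G" by (auto simp: F_def fun_eq_iff)
  ultimately have hG: "(G has_integral Re (eta 0)) {0..}" by simp
  have c01: "continuous_on {0..1} G" by (rule continuous_on_subset[OF G_cont]) auto
  obtain a where a: "a \<in> {0..1}" "\<And>y. y \<in> {0..1} \<Longrightarrow> G a \<le> G y"
    using continuous_attains_inf[OF compact_Icc _ c01] by auto
  have Ga: "0 < G a" using a(1) by (intro G_pos) auto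
  have "G a = integral {0..1::real} (\<lambda>_. G a)" by simp
  also have "\<dots> \<le> integral {0..1} G"
    using a(2) by (intro integral_le integrable_continuous_interval c01) auto
  also have "\<dots> \<le> integral {0..} G"
    using hG G_nonneg by (intro integral_subset_le integrable_continuous_interval c01) auto
  also have "\<dots> = Re (eta 0)" using hG by (rule integral_unique)
  finally have "0 < Re (eta 0)" using Ga by linarith
  then show ?thesis by auto
qed

theorem theorem2:
  fixes y :: real
  shows "\<exists>\<epsilon>>0. \<forall>x::real. 0 < \<bar>x\<bar> \<and> \<bar>x\<bar> < \<epsilon> \<longrightarrow> eta (Complex x y) \<noteq> 0"
proof -
  have "\<forall>\<^sub>F w in at (Complex 0 y). eta w \<noteq> 0 \<and> w \<in> UNIV"
    by (rule non_zero_neighbour_alt[OF eta_holo open_UNIV connected_UNIV UNIV_I UNIV_I eta0])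
  then obtain d where d: "d > 0" "\<And>w. w \<noteq> Complex 0 y \<Longrightarrow> dist w (Complex 0 y) < d \<Longrightarrow> eta w \<noteq> 0"
    unfolding eventually_at by auto
  show ?thesis
  proof (intro exI[of _ d] conjI allI impI)
    fix x :: real assume x: "0 < \<bar>x\<bar> \<and> \<bar>x\<bar> < d"
    have "Complex x y - Complex 0 y = complex_of_real x" by (simp add: complex_eq_iff)
    then have "dist (Complex x y) (Complex 0 y) = \<bar>x\<bar>"
      by (simp add: dist_norm)
    then show "eta (Complex x y) \<noteq> 0" using x by (intro d(2)) auto
  qed (use d in auto)
qed

end
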